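(* For $n\ge 2$, let $X = (x_1,\dots,x_n)$ with $x_i\ge 0$ for $i=1,\dots,n$, and let $\alpha = (\alpha_1,\dots,\alpha_n)$ satisfy $\alpha_i > 0$ and $\sum_{i=1}^n \alpha_i = 1$. Then for all $r\in (0,1]$ and all $s\in [1,\infty)$, $$\frac{1}{1-\alpha_{\min}}\operatorname{Var}_\alpha(X^{r/2})^{1/r} \le E_\alpha X - \Pi_\alpha X \le \frac{1}{\alpha_{\min}} \operatorname{Var}_\alpha(X^{s/2})^{1/s}.$$
   Context: Notation: for a vector $Y=(y_1,\dots,y_n)$ and weights $\alpha=(\alpha_1,\dots,\alpha_n)$ with $\alpha_i>0$, $\sum_i\alpha_i=1$, the weighted arithmetic mean is $E_\alpha(Y) := \sum_{i=1}^n \alpha_i y_i$, the weighted geometric mean is $\Pi_\alpha(Y) := \prod_{i=1}^n y_i^{\alpha_i}$, and the weighted variance is $\operatorname{Var}_\alpha(Y) = \sum_{i=1}^n \alpha_i \left(y_i - \sum_{k=1}^n \alpha_k y_k\right)^2 = \sum_{i=1}^n \alpha_i y_i^2 - \left(\sum_{k=1}^n \alpha_k y_k\right)^2$. Powers of vectors are taken coordinatewise, e.g. $X^{r/2} = (x_1^{r/2},\dots,x_n^{r/2})$. $\alpha_{\min}$ denotes the minimum of $\alpha_1,\dots,\alpha_n$. *)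

theory Defs
  imports "HOL-Analysis.Analysis"
begin

text \<open>Vectors of length n are functions on the index set {1..n}.\<close>

definition wmean :: "nat \<Rightarrow> (nat \<Rightarrow> real) \<Rightarrow> (nat \<Rightarrow> real) \<Rightarrow> real" where
  "wmean n a y = (\<Sum>i=1..n. a i * y i)"

definition wgeom :: "nat \<Rightarrow> (nat \<Rightarrow> real) \<Rightarrow> (nat \<Rightarrow> real) \<Rightarrow> real" where
  "wgeom n a y = (\<Prod>i=1..n. y i powr a i)"

definition wvar :: "nat \<Rightarrow> (nat \<Rightarrow> real) \<Rightarrow> (nat \<Rightarrow> real) \<Rightarrow> real" where
  "wvar n a y = (\<Sum>i=1..n. a i * (y i - wmean n a y)^2)"

definition vpow :: "(nat \<Rightarrow> real) \<Rightarrow> real \<Rightarrow> (nat \<Rightarrow> real)" where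
  "vpow x p = (\<lambda>i. x i powr p)"

definition amin :: "nat \<Rightarrow> (nat \<Rightarrow> real) \<Rightarrow> real" where
  "amin n a = Min (a ` {1..n})"

end

theory Submission
  imports Defs
begin


lemma am2:
  fixes a b l m :: real
  assumes "0 \<le> l" "0 \<le> m" "l + m = 1" "0 \<le> a" "0 \<le> b"
  shows "a powr l * b powr m \<le> l * a + m * b"
proof (cases "a = 0 \<or> b = 0")
  case True
  then show ?thesis using assms by auto
next
  case False
  then show ?thesis using Youngs_inequality_0[of l m a b] assms by auto
qed

lemma subadd_powr:
  fixes v t r :: real
  assumes "0 \<le> v" "0 \<le> t" "0 < r" "r \<le> 1"
  shows "(v + t) powr r \<le> v powr r + t powr r"
proof (cases "v + t = 0")
  case True then show ?thesis using assms by auto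
next
  case False
  then have p: "v + t > 0" using assms by auto
  have 1: "v / (v+t) \<le> (v/(v+t)) powr r"
    using powr_mono'[of r 1 "v/(v+t)"] assms p by auto
  have 2: "t / (v+t) \<le> (t/(v+t)) powr r"
    using powr_mono'[of r 1 "t/(v+t)"] assms p by auto
  have "1 \<le> (v/(v+t)) powr r + (t/(v+t)) powr r"
  proof -
    have "v/(v+t) + t/(v+t) = 1" using p by (simp add: add_divide_distrib[symmetric])
    then show ?thesis using 1 2 by linarith
  qed
  then have "1 \<le> (v powr r + t powr r) / (v+t) powr r"
    by (simp add: powr_divide add_divide_distrib)
  then show ?thesis using p by (simp add: divide_simps split: if_splits)
qed

lemma P1:
  fixes u v r :: real
  assumes "0 \<le> u" "0 \<le> v" "0 < r" "r \<le> 1"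
  shows "\<bar>u powr r - v powr r\<bar> \<le> \<bar>u - v\<bar> powr r"
proof -
  have k: "\<bar>u powr r - v powr r\<bar> \<le> \<bar>u - v\<bar> powr r" if "0 \<le> u" "0 \<le> v" "v \<le> u" for u v
  proof -
    have "u powr r \<le> v powr r + (u - v) powr r"
      using subadd_powr[of v "u - v" r] that assms by auto
    moreover have "v powr r \<le> u powr r" using powr_mono2 that assms by auto
    ultimately show ?thesis using that by auto
  qed
  show ?thesis
  proof (cases "v \<le> u")
    case True then show ?thesis using k assms by auto
  next
    case False then show ?thesis using k[of v u] assms by (auto simp: abs_minus_commute)
  qed
qed

lemma P2:
  fixes u v s :: real
  assumes "0 \<le> u" "0 \<le> v" "1 \<le> s"
  shows "\<bar>u - v\<bar> powr s \<le> \<bar>u powr s - v powr s\<bar>"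
proof -
  have "\<bar>(u powr s) powr (1/s) - (v powr s) powr (1/s)\<bar> \<le> \<bar>u powr s - v powr s\<bar> powr (1/s)"
    using P1[of "u powr s" "v powr s" "1/s"] assms by auto
  then have "\<bar>u - v\<bar> \<le> \<bar>u powr s - v powr s\<bar> powr (1/s)"
    using assms by (simp add: powr_powr)
  then have "\<bar>u - v\<bar> powr s \<le> (\<bar>u powr s - v powr s\<bar> powr (1/s)) powr s"
    using powr_mono2 assms by auto
  then show ?thesis using assms by (simp add: powr_powr)
qed

lemma J1:
  fixes a z :: "'a \<Rightarrow> real" and r :: real
  assumes "finite S" "\<And>i. i \<in> S \<Longrightarrow> 0 \<le> a i" "(\<Sum>i\<in>S. a i) = 1"
    "\<And>i. i \<in> S \<Longrightarrow> 0 \<le> z i" "0 < r" "r \<le> 1"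
  shows "(\<Sum>i\<in>S. a i * z i powr r) \<le> (\<Sum>i\<in>S. a i * z i) powr r"
proof -
  define M where "M = (\<Sum>i\<in>S. a i * z i)"
  have M0: "M \<ge> 0" unfolding M_def using assms by (auto intro: sum_nonneg)
  show ?thesis
  proof (cases "M = 0")
    case True
    then have "\<forall>i\<in>S. a i * z i = 0"
      using sum_nonneg_eq_0_iff[of S "\<lambda>i. a i * z i"] assms unfolding M_def by auto
    then have "(\<Sum>i\<in>S. a i * z i powr r) = 0" by (intro sum.neutral) auto
    then show ?thesis by (simp add: M_def[symmetric])
  next
    case False
    then have Mp: "M > 0" using M0 by auto
    have pt: "a i * z i powr r \<le> M powr r * (a i * (r * (z i / M)) + a i * (1 - r))" if "i \<in> S" for i
    proof -
      have "(z i / M) powr r * 1 powr (1 - r) \<le> r * (z i / M) + (1 - r) * 1"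
        using am2[of r "1 - r" "z i / M" 1] assms that Mp by auto
      then have h: "(z i / M) powr r \<le> r * (z i / M) + (1 - r)" by simp
      have e: "z i powr r = M powr r * (z i/M) powr r" using Mp by (simp add: powr_divide)
      have "z i powr r \<le> M powr r * (r * (z i / M) + (1 - r))"
        unfolding e by (rule mult_left_mono[OF h]) simp
      then have "a i * z i powr r \<le> a i * (M powr r * (r * (z i / M) + (1 - r)))"
        using assms that by (intro mult_left_mono) auto
      then show ?thesis by (simp add: algebra_simps)
    qed
    have "(\<Sum>i\<in>S. a i * z i powr r) \<le> (\<Sum>i\<in>S. M powr r * (a i * (r * (z i / M)) + a i * (1 - r)))"
      using pt by (intro sum_mono) auto
    also have "\<dots> = (\<Sum>i\<in>S. (M powr r * r / M) * (a i * z i) + (M powr r * (1-r)) * a i)"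
      by (rule sum.cong) (simp_all add: algebra_simps)
    also have "\<dots> = (M powr r * r / M) * (\<Sum>i\<in>S. a i * z i) + (M powr r * (1-r)) * (\<Sum>i\<in>S. a i)"
      by (simp only: sum.distrib sum_distrib_left)
    also have "\<dots> = (M powr r * r / M) * M + (M powr r * (1-r)) * (\<Sum>i\<in>S. a i)"
      by (simp only: M_def)
    also have "\<dots> = M powr r" using Mp assms by (simp add: algebra_simps)
    finally show ?thesis by (simp add: M_def)
  qed
qed

lemma J2:
  fixes a z :: "'a \<Rightarrow> real" and s :: real
  assumes "finite S" "\<And>i. i \<in> S \<Longrightarrow> 0 \<le> a i" "(\<Sum>i\<in>S. a i) = 1"
    "\<And>i. i \<in> S \<Longrightarrow> 0 \<le> z i" "1 \<le> s"
  shows "(\<Sum>i\<in>S. a i * z i) powr s \<le> (\<Sum>i\<in>S. a i * z i powr s)"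
proof -
  have "(\<Sum>i\<in>S. a i * (z i powr s) powr (1/s)) \<le> (\<Sum>i\<in>S. a i * z i powr s) powr (1/s)"
    using J1[of S a "\<lambda>i. z i powr s" "1/s"] assms by auto
  moreover have "(\<Sum>i\<in>S. a i * (z i powr s) powr (1/s)) = (\<Sum>i\<in>S. a i * z i)"
    using assms by (intro sum.cong) (auto simp: powr_powr)
  ultimately have "(\<Sum>i\<in>S. a i * z i) \<le> (\<Sum>i\<in>S. a i * z i powr s) powr (1/s)" by simp
  moreover have "0 \<le> (\<Sum>i\<in>S. a i * z i)" using assms by (auto intro: sum_nonneg)
  ultimately have "(\<Sum>i\<in>S. a i * z i) powr s \<le> ((\<Sum>i\<in>S. a i * z i powr s) powr (1/s)) powr s"
    using powr_mono2 assms by auto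
  also have "\<dots> = (\<Sum>i\<in>S. a i * z i powr s)"
    using assms by (simp add: powr_powr sum_nonneg)
  finally show ?thesis .
qed

lemma wamgm:
  fixes a y :: "'a \<Rightarrow> real"
  assumes "finite S" "S \<noteq> {}" "\<And>i. i \<in> S \<Longrightarrow> 0 \<le> a i" "(\<Sum>i\<in>S. a i) = 1"
    "\<And>i. i \<in> S \<Longrightarrow> 0 \<le> y i"
  shows "(\<Prod>i\<in>S. y i powr a i) \<le> (\<Sum>i\<in>S. a i * y i)"
proof (cases "\<exists>i\<in>S. y i = 0")
  case True
  then have "(\<Prod>i\<in>S. y i powr a i) = 0" using assms by auto
  moreover have "0 \<le> (\<Sum>i\<in>S. a i * y i)" using assms by (auto intro!: sum_nonneg)
  ultimately show ?thesis by simp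
next
  case False
  then have yp: "\<And>i. i \<in> S \<Longrightarrow> y i > 0" using assms by force
  have "ln (\<Sum>i \<in> S. a i *\<^sub>R y i) \<ge> (\<Sum>i \<in> S. a i * ln (y i))"
  proof (intro concave_on_sum)
    show "concave_on {0<..} ln" by (simp add: ln_concave)
    show "\<And>i. i\<in>S \<Longrightarrow> y i \<in> {0<..}" using yp by auto
  qed (use assms in auto)
  moreover have pos: "(\<Sum>i \<in> S. a i * y i) > 0"
  proof -
    obtain j where j: "j \<in> S" "a j > 0"
      using assms sum_nonneg_eq_0_iff[of S a] by (metis less_eq_real_def zero_neq_one)
    have "a j * y j \<le> (\<Sum>i \<in> S. a i * y i)"
      using j assms yp by (intro member_le_sum) (auto simp: less_imp_le)
    moreover have "a j * y j > 0" using j yp by auto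
    ultimately show ?thesis by linarith
  qed
  ultimately have "exp (\<Sum>i \<in> S. a i * ln (y i)) \<le> (\<Sum>i \<in> S. a i * y i)"
    using ln_ge_iff[OF pos] by simp
  moreover have "(\<Prod>i\<in>S. y i powr a i) = (\<Prod>i\<in>S. exp (a i * ln (y i)))"
  proof (rule prod.cong)
    fix i assume "i \<in> S" then show "y i powr a i = exp (a i * ln (y i))"
      using yp[of i] by (simp add: powr_def)
  qed simp
  moreover have "(\<Prod>i\<in>S. exp (a i * ln (y i))) = exp (\<Sum>i \<in> S. a i * ln (y i))"
    using assms(1) by (rule exp_sum[symmetric])
  ultimately show ?thesis by simp
qed

lemma gm_ge_min:
  fixes a y :: "'a \<Rightarrow> real"
  assumes "finite S" "\<And>i. i \<in> S \<Longrightarrow> 0 \<le> a i" "(\<Sum>i\<in>S. a i) = 1"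
    "\<And>i. i \<in> S \<Longrightarrow> c \<le> y i" "0 \<le> c"
  shows "c \<le> (\<Prod>i\<in>S. y i powr a i)"
proof (cases "c = 0")
  case True then show ?thesis by (auto intro: prod_nonneg)
next
  case False
  have "(\<Prod>i\<in>S. c powr a i) \<le> (\<Prod>i\<in>S. y i powr a i)"
    using assms by (intro prod_mono) (auto intro: powr_mono2)
  moreover have "(\<Prod>i\<in>S. c powr a i) = c"
    using powr_sum[of c a S] False assms by simp
  ultimately show ?thesis by simp
qed



lemma two_pt_half:
  fixes a b p :: real
  assumes "0 < p" "p \<le> 1/2" "0 \<le> a" "0 \<le> b"
  defines "g \<equiv> a powr p * b powr (1-p)"
  shows "p*(a-b)^2 \<le> p*a^2 + (1-p)*b^2 - g^2 \<and> p*a^2 + (1-p)*b^2 - g^2 \<le> (1-p)*(a-b)^2"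
proof (cases "a = 0 \<or> b = 0")
  case True
  then have "g = 0" using assms by auto
  moreover have "2*p*(b*b) \<le> 1*(b*b)" "2*p*(a*a) \<le> 1*(a*a)"
    using assms by (intro mult_right_mono; simp)+
  ultimately show ?thesis using True assms
    by (auto simp: power2_eq_square algebra_simps)
next
  case False
  then have ap: "a > 0" and bp: "b > 0" using assms by auto
  have gsq: "g^2 = exp (2*p*ln a + 2*(1-p)*ln b)"
    using ap bp unfolding g_def by (simp add: powr_def power2_eq_square exp_add[symmetric] algebra_simps)
  have e1: "(a*b) powr (2*p) * (b^2) powr (1-2*p) = g^2"
    using ap bp unfolding gsq by (simp add: powr_def ln_mult power2_eq_square exp_add[symmetric] algebra_simps)
  have lo: "g^2 \<le> 2*p*(a*b) + (1-2*p)*b^2"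
    using am2[of "2*p" "1-2*p" "a*b" "b^2"] assms ap bp e1 by auto
  have e2: "(g^2) powr (1/(2-2*p)) * (a^2) powr ((1-2*p)/(2-2*p)) = a*b"
  proof -
    have "(g^2) powr (1/(2-2*p)) * (a^2) powr ((1-2*p)/(2-2*p))
       = exp ((2*p*ln a + 2*(1-p)*ln b)/(2-2*p) + 2*ln a*((1-2*p)/(2-2*p)))"
    proof -
      have "2-2*p \<noteq> 0" using assms by auto
      then show ?thesis
        using ap unfolding gsq by (simp add: powr_def power2_eq_square ln_mult exp_add[symmetric] field_simps)
    qed
    also have "(2*p*ln a + 2*(1-p)*ln b)/(2-2*p) + 2*ln a*((1-2*p)/(2-2*p)) = ln a + ln b"
    proof -
      have d: "2-2*p \<noteq> 0" using assms by auto
      have "(2*p*ln a + 2*(1-p)*ln b)/(2-2*p) + 2*ln a*((1-2*p)/(2-2*p))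
          = ((2-2*p)*ln a + (2-2*p)*ln b)/(2-2*p)"
        by (simp add: add_divide_distrib[symmetric] times_divide_eq_right[symmetric] algebra_simps)
      also have "\<dots> = ln a + ln b" using d by (simp add: add_divide_distrib[symmetric] distrib_left[symmetric])
      finally show ?thesis .
    qed
    also have "exp (ln a + ln b) = a*b" using ap bp by (simp add: exp_add)
    finally show ?thesis .
  qed
  have "a*b \<le> (1/(2-2*p)) * g^2 + ((1-2*p)/(2-2*p)) * a^2"
    using am2[of "1/(2-2*p)" "(1-2*p)/(2-2*p)" "g^2" "a^2"] assms e2
    by (simp add: field_simps)
  then have "(2-2*p)*(a*b) \<le> (2-2*p)*((1/(2-2*p)) * g^2 + ((1-2*p)/(2-2*p)) * a^2)"
    using assms by (intro mult_left_mono) auto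
  also have "\<dots> = g^2 + (1-2*p)*a^2"
  proof -
    have d: "2-2*p \<noteq> 0" using assms by auto
    show ?thesis using d by (simp add: distrib_left)
  qed
  finally have up: "2*(1-p)*(a*b) \<le> g^2 + (1-2*p)*a^2" by (simp add: algebra_simps)
  show ?thesis using lo up by (simp add: power2_eq_square algebra_simps)
qed

lemma two_pt:
  fixes a b p :: real
  assumes "0 < p" "p < 1" "0 \<le> a" "0 \<le> b"
  shows "min p (1-p) * (a-b)^2 \<le> p*a^2 + (1-p)*b^2 - (a powr p * b powr (1-p))^2
    \<and> p*a^2 + (1-p)*b^2 - (a powr p * b powr (1-p))^2 \<le> max p (1-p) * (a-b)^2"
proof (cases "p \<le> 1/2")
  case True
  then show ?thesis using two_pt_half[of p a b] assms by auto
next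
  case False
  have "(1-p)*(b-a)^2 \<le> (1-p)*b^2 + (1-(1-p))*a^2 - (b powr (1-p) * a powr (1-(1-p)))^2 \<and>
    (1-p)*b^2 + (1-(1-p))*a^2 - (b powr (1-p) * a powr (1-(1-p)))^2 \<le> (1-(1-p))*(b-a)^2"
    using two_pt_half[of "1-p" b a] assms False by auto
  then show ?thesis using False by (auto simp: power2_commute mult.commute algebra_simps)
qed


definition QQ :: "nat set \<Rightarrow> (nat \<Rightarrow> real) \<Rightarrow> (nat \<Rightarrow> real) \<Rightarrow> real" where
  "QQ S a y = (\<Sum>i\<in>S. a i * (y i)^2)"
definition AA :: "nat set \<Rightarrow> (nat \<Rightarrow> real) \<Rightarrow> (nat \<Rightarrow> real) \<Rightarrow> real" where
  "AA S a y = (\<Sum>i\<in>S. a i * y i)"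
definition GG :: "nat set \<Rightarrow> (nat \<Rightarrow> real) \<Rightarrow> (nat \<Rightarrow> real) \<Rightarrow> real" where
  "GG S a y = (\<Prod>i\<in>S. y i powr a i)"
definition MM :: "nat set \<Rightarrow> (nat \<Rightarrow> real) \<Rightarrow> real" where
  "MM S a = Min (a ` S)"

lemma var_eq:
  assumes "finite S" "(\<Sum>i\<in>S. a i) = 1"
  shows "(\<Sum>i\<in>S. a i * (y i - c)^2) = QQ S a y - 2 * c * AA S a y + c^2"
proof -
  have "(\<Sum>i\<in>S. a i * (y i - c)^2) = (\<Sum>i\<in>S. a i * (y i)^2 - (2*c) * (a i * y i) + c^2 * a i)"
    by (rule sum.cong) (simp_all add: power2_eq_square algebra_simps)
  also have "\<dots> = QQ S a y - 2 * c * AA S a y + c^2 * (\<Sum>i\<in>S. a i)"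
    unfolding QQ_def AA_def by (simp add: sum.distrib sum_subtractf sum_distrib_left)
  finally show ?thesis using assms by simp
qed

lemma var_nonneg:
  assumes "finite S" "(\<Sum>i\<in>S. a i) = 1" "\<And>i. i \<in> S \<Longrightarrow> 0 \<le> a i"
  shows "(AA S a y)^2 \<le> QQ S a y"
proof -
  have "0 \<le> (\<Sum>i\<in>S. a i * (y i - AA S a y)^2)" using assms by (auto intro!: sum_nonneg)
  then show ?thesis using var_eq[OF assms(1,2), of y "AA S a y"] by (simp add: power2_eq_square)
qed

lemma split_facts:
  assumes fin: "finite S" and jS: "j \<in> S" and c2: "card S \<ge> 2"
    and apos: "\<And>i. i \<in> S \<Longrightarrow> 0 < a i" and asum: "(\<Sum>i\<in>S. a i) = 1"
  defines "w \<equiv> 1 - a j"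
  shows "0 < w" "0 < a j" "S - {j} \<noteq> {}" "finite (S - {j})" "card (S - {j}) = card S - 1"
    "\<And>i. i \<in> S - {j} \<Longrightarrow> 0 < a i / w"
    "(\<Sum>i\<in>S - {j}. a i / w) = 1"
    "QQ S a y = w * QQ (S - {j}) (\<lambda>i. a i / w) y + a j * (y j)^2"
    "AA S a y = w * AA (S - {j}) (\<lambda>i. a i / w) y + a j * y j"
    "GG S a y = y j powr a j * (GG (S - {j}) (\<lambda>i. a i / w) y) powr w"
    "MM S a \<le> a j" "MM S a \<le> w * MM (S - {j}) (\<lambda>i. a i / w)" "MM S a \<le> w"
    "MM S a \<le> MM (S - {j}) (\<lambda>i. a i / w)" "0 < MM S a"
proof -
  show ne: "S - {j} \<noteq> {}"
  proof
    assume "S - {j} = {}"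
    then have "S \<subseteq> {j}" by auto
    then have "card S \<le> 1" using card_mono[of "{j}" S] by auto
    then show False using c2 by simp
  qed
  show fin': "finite (S - {j})" using fin by simp
  show "card (S - {j}) = card S - 1" using fin jS by simp
  have sw: "(\<Sum>i\<in>S - {j}. a i) = w"
    using sum.remove[OF fin jS, of a] asum unfolding w_def by simp
  have wpos: "0 < w"
    using sum_pos[OF fin' ne, of a] apos sw by auto
  then show "0 < w" .
  show "0 < a j" using apos jS by simp
  show "\<And>i. i \<in> S - {j} \<Longrightarrow> 0 < a i / w" using apos wpos by simp
  show "(\<Sum>i\<in>S - {j}. a i / w) = 1" using sw wpos by (simp add: sum_divide_distrib[symmetric])
  have rem: "(\<Sum>i\<in>S. f i) = f j + (\<Sum>i\<in>S - {j}. f i)" for f :: "nat \<Rightarrow> real"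
    using sum.remove[OF fin jS] by simp
  have wb: "w * (a i / w) = a i" for i using wpos by simp
  show "QQ S a y = w * QQ (S - {j}) (\<lambda>i. a i / w) y + a j * (y j)^2"
    unfolding QQ_def using rem[of "\<lambda>i. a i * (y i)^2"]
    using wpos by (simp add: sum_distrib_left mult.assoc[symmetric] wb)
  show "AA S a y = w * AA (S - {j}) (\<lambda>i. a i / w) y + a j * y j"
    unfolding AA_def using rem[of "\<lambda>i. a i * y i"]
    using wpos by (simp add: sum_distrib_left mult.assoc[symmetric] wb)
  have "(\<Prod>i\<in>S - {j}. y i powr (a i / w)) powr w = (\<Prod>i\<in>S - {j}. (y i powr (a i / w)) powr w)"
    by (rule prod_powr_distrib)
  also have "\<dots> = (\<Prod>i\<in>S - {j}. y i powr a i)"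
    using wpos by (simp add: powr_powr)
  finally have gp: "(\<Prod>i\<in>S - {j}. y i powr (a i / w)) powr w = (\<Prod>i\<in>S - {j}. y i powr a i)" .
  show "GG S a y = y j powr a j * (GG (S - {j}) (\<lambda>i. a i / w) y) powr w"
    unfolding GG_def gp using prod.remove[OF fin jS, of "\<lambda>i. y i powr a i"] by simp
  have minle: "MM S a \<le> a i" if "i \<in> S" for i
    unfolding MM_def using fin that by (intro Min_le) auto
  show "MM S a \<le> a j" using minle jS by simp
  have "Min ((\<lambda>i. a i / w) ` (S - {j})) \<in> (\<lambda>i. a i / w) ` (S - {j})"
    using fin' ne by (intro Min_in) auto
  then obtain i0 where i0: "i0 \<in> S - {j}" "MM (S - {j}) (\<lambda>i. a i / w) = a i0 / w"
    unfolding MM_def by blast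
  show "MM S a \<le> w * MM (S - {j}) (\<lambda>i. a i / w)"
    using i0 minle[of i0] wb by simp
  have "a i0 \<le> w"
    using member_le_sum[of i0 "S - {j}" a] i0 apos fin' sw by (auto simp: less_imp_le)
  then show "MM S a \<le> w" using minle[of i0] i0 by simp
  have "w \<le> 1" using apos jS unfolding w_def by (simp add: less_imp_le)
  then have "a i0 \<le> a i0 / w" using wpos apos[of i0] i0
    by (simp add: le_divide_eq)
  then show "MM S a \<le> MM (S - {j}) (\<lambda>i. a i / w)" using minle[of i0] i0 by simp
  have "Min (a ` S) \<in> a ` S" using fin jS by (intro Min_in) auto
  then obtain i1 where "i1 \<in> S" "MM S a = a i1"
    unfolding MM_def by blast
  then show "0 < MM S a" using apos by simp
qed


lemma step_common:
  fixes w p m Q' A' H yj V' :: real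
  assumes "w + p = 1"
  shows "(w * Q' + p * yj^2) - (w * A' + p * yj)^2 = w * (Q' - A'^2) + p * w * (yj - A')^2"
proof -
  have p: "p = 1 - w" using assms by simp
  show ?thesis unfolding p by (simp add: power2_eq_square algebra_simps)
qed

lemma step_upper:
  assumes fin: "finite S" and jS: "j \<in> S" and c2: "card S \<ge> 2"
    and apos: "\<And>i. i \<in> S \<Longrightarrow> 0 < a i" and asum: "(\<Sum>i\<in>S. a i) = 1"
    and ypos: "\<And>i. i \<in> S \<Longrightarrow> 0 \<le> y i" and ymin: "\<And>i. i \<in> S \<Longrightarrow> y j \<le> y i"
    and IH: "MM (S - {j}) (\<lambda>i. a i / (1 - a j)) * (QQ (S - {j}) (\<lambda>i. a i / (1 - a j)) y - (GG (S - {j}) (\<lambda>i. a i / (1 - a j)) y)^2)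
       \<le> QQ (S - {j}) (\<lambda>i. a i / (1 - a j)) y - (AA (S - {j}) (\<lambda>i. a i / (1 - a j)) y)^2"
  shows "MM S a * (QQ S a y - (GG S a y)^2) \<le> QQ S a y - (AA S a y)^2"
proof -
  define w where "w = 1 - a j"
  define b where "b = (\<lambda>i. a i / w)"
  define S' where "S' = S - {j}"
  note F = split_facts[OF fin jS c2 apos asum, folded w_def, folded b_def, folded S'_def]
  define p where "p = a j"
  define H where "H = GG S' b y"
  define A' where "A' = AA S' b y"
  define Q' where "Q' = QQ S' b y"
  define m where "m = MM S a"
  define m' where "m' = MM S' b"
  have IH': "m' * (Q' - H^2) \<le> Q' - A'^2"
    using IH unfolding m'_def Q'_def H_def A'_def b_def S'_def w_def .
  have wp: "w + p = 1" unfolding w_def p_def by simp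
  have bpos: "\<And>i. i \<in> S' \<Longrightarrow> 0 \<le> b i" using F(6) unfolding b_def by (simp add: less_imp_le)
  have bsum: "(\<Sum>i\<in>S'. b i) = 1" using F(7) unfolding b_def .
  have S'S: "\<And>i. i \<in> S' \<Longrightarrow> i \<in> S" unfolding S'_def by auto
  have H0: "0 \<le> H" unfolding H_def GG_def by (auto intro: prod_nonneg)
  have HA: "H \<le> A'" unfolding H_def A'_def GG_def AA_def
    using wamgm[OF F(4) F(3) bpos bsum, of y] ypos S'S by auto
  have yH: "y j \<le> H" unfolding H_def GG_def
    using gm_ge_min[OF F(4) bpos bsum, of "y j" y] ymin ypos jS S'S by auto
  have yj0: "0 \<le> y j" using ypos jS by simp
  have QA: "A'^2 \<le> Q'" unfolding A'_def Q'_def using var_nonneg[OF F(4) bsum bpos] .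
  have QH: "H^2 \<le> Q'" using QA HA H0 by (smt (verit) power_mono)
  have T: "p * (y j)^2 + w * H^2 - (y j powr p * H powr w)^2 \<le> max p w * (y j - H)^2"
    using two_pt[of p "y j" H] F(1,2) wp yj0 H0 unfolding p_def by (simp add: w_def)
  have Qd: "QQ S a y = w * Q' + p * (y j)^2" using F(8) unfolding Q'_def p_def .
  have Ad: "AA S a y = w * A' + p * y j" using F(9) unfolding A'_def p_def .
  have Gd: "GG S a y = y j powr p * H powr w" using F(10) unfolding H_def p_def .
  have m_p: "m \<le> p" using F(11) unfolding m_def p_def .
  have m_w: "m \<le> w * m'" using F(12) unfolding m_def m'_def .
  have m_w1: "m \<le> w" using F(13) unfolding m_def .
  have m0: "0 < m" using F(15) unfolding m_def .
  have w0: "0 < w" using F(1) .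
  have p0: "0 < p" using F(2) unfolding p_def .
  have w1: "w \<le> 1" using wp p0 by simp
  have d1: "m * (Q' - H^2) \<le> w * (Q' - A'^2)"
  proof -
    have "m * (Q' - H^2) \<le> (w * m') * (Q' - H^2)" using m_w QH by (intro mult_right_mono) auto
    also have "\<dots> = w * (m' * (Q' - H^2))" by simp
    also have "\<dots> \<le> w * (Q' - A'^2)" using IH' w0 by (intro mult_left_mono) auto
    finally show ?thesis .
  qed
  have d2: "m * w * (Q' - H^2) \<le> w * (Q' - A'^2)"
  proof -
    have "m * w * (Q' - H^2) = w * (m * (Q' - H^2))" by simp
    also have "\<dots> \<le> w * (w * (Q' - A'^2))" using d1 w0 by (intro mult_left_mono) auto
    also have "\<dots> \<le> 1 * (w * (Q' - A'^2))" using w1 w0 QA by (intro mult_right_mono) auto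
    finally show ?thesis by simp
  qed
  have mmax: "m * max p w \<le> p * w"
  proof (cases "p \<le> w")
    case True then show ?thesis using m_p w0 by (simp add: max_def mult_right_mono)
  next
    case False then show ?thesis using m_w1 p0 by (simp add: max_def mult_right_mono mult.commute)
  qed
  have "(H - y j)^2 \<le> (A' - y j)^2"
    using yH HA by (intro power_mono) auto
  then have sq: "(y j - H)^2 \<le> (y j - A')^2" by (simp add: power2_commute)
  have d3: "m * (p * (y j)^2 + w * H^2 - (y j powr p * H powr w)^2) \<le> p * w * (y j - A')^2"
  proof -
    have "m * (p * (y j)^2 + w * H^2 - (y j powr p * H powr w)^2) \<le> m * (max p w * (y j - H)^2)"
      using T m0 by (intro mult_left_mono) auto
    also have "\<dots> = (m * max p w) * (y j - H)^2" by simp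
    also have "\<dots> \<le> (p * w) * (y j - H)^2" using mmax by (intro mult_right_mono) auto
    also have "\<dots> \<le> (p * w) * (y j - A')^2" using sq p0 w0 by (intro mult_left_mono) auto
    finally show ?thesis .
  qed
  have "QQ S a y - (GG S a y)^2 = w * (Q' - H^2) + (p * (y j)^2 + w * H^2 - (y j powr p * H powr w)^2)"
    using Qd Gd by (simp add: algebra_simps)
  moreover have "QQ S a y - (AA S a y)^2 = w * (Q' - A'^2) + p * w * (y j - A')^2"
    using Qd Ad step_common[OF wp] by simp
  ultimately show ?thesis using d2 d3 unfolding m_def[symmetric]
    by (simp add: distrib_left)
qed

lemma step_lower:
  assumes fin: "finite S" and jS: "j \<in> S" and c2: "card S \<ge> 2"
    and apos: "\<And>i. i \<in> S \<Longrightarrow> 0 < a i" and asum: "(\<Sum>i\<in>S. a i) = 1"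
    and ypos: "\<And>i. i \<in> S \<Longrightarrow> 0 \<le> y i" and ymax: "\<And>i. i \<in> S \<Longrightarrow> y i \<le> y j"
    and IH: "QQ (S - {j}) (\<lambda>i. a i / (1 - a j)) y - (AA (S - {j}) (\<lambda>i. a i / (1 - a j)) y)^2
       \<le> (1 - MM (S - {j}) (\<lambda>i. a i / (1 - a j))) * (QQ (S - {j}) (\<lambda>i. a i / (1 - a j)) y - (GG (S - {j}) (\<lambda>i. a i / (1 - a j)) y)^2)"
  shows "QQ S a y - (AA S a y)^2 \<le> (1 - MM S a) * (QQ S a y - (GG S a y)^2)"
proof -
  define w where "w = 1 - a j"
  define b where "b = (\<lambda>i. a i / w)"
  define S' where "S' = S - {j}"
  note F = split_facts[OF fin jS c2 apos asum, folded w_def, folded b_def, folded S'_def]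
  define p where "p = a j"
  define H where "H = GG S' b y"
  define A' where "A' = AA S' b y"
  define Q' where "Q' = QQ S' b y"
  define m where "m = MM S a"
  define m' where "m' = MM S' b"
  have IH': "Q' - A'^2 \<le> (1 - m') * (Q' - H^2)"
    using IH unfolding m'_def Q'_def H_def A'_def b_def S'_def w_def .
  have wp: "w + p = 1" unfolding w_def p_def by simp
  have bpos: "\<And>i. i \<in> S' \<Longrightarrow> 0 \<le> b i" using F(6) unfolding b_def by (simp add: less_imp_le)
  have bsum: "(\<Sum>i\<in>S'. b i) = 1" using F(7) unfolding b_def .
  have S'S: "\<And>i. i \<in> S' \<Longrightarrow> i \<in> S" unfolding S'_def by auto
  have H0: "0 \<le> H" unfolding H_def GG_def by (auto intro: prod_nonneg)
  have HA: "H \<le> A'" unfolding H_def A'_def GG_def AA_def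
    using wamgm[OF F(4) F(3) bpos bsum, of y] ypos S'S by auto
  have Ay: "A' \<le> y j"
  proof -
    have "A' \<le> (\<Sum>i\<in>S'. b i * y j)" unfolding A'_def AA_def
      using bpos ymax S'S by (intro sum_mono mult_left_mono) auto
    also have "\<dots> = y j" using bsum by (simp add: sum_distrib_right[symmetric])
    finally show ?thesis .
  qed
  have yj0: "0 \<le> y j" using ypos jS by simp
  have QA: "A'^2 \<le> Q'" unfolding A'_def Q'_def using var_nonneg[OF F(4) bsum bpos] .
  have QH: "H^2 \<le> Q'" using QA HA H0 by (smt (verit) power_mono)
  have T: "min p w * (y j - H)^2 \<le> p * (y j)^2 + w * H^2 - (y j powr p * H powr w)^2"
    using two_pt[of p "y j" H] F(1,2) wp yj0 H0 unfolding p_def by (simp add: w_def)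
  have Qd: "QQ S a y = w * Q' + p * (y j)^2" using F(8) unfolding Q'_def p_def .
  have Ad: "AA S a y = w * A' + p * y j" using F(9) unfolding A'_def p_def .
  have Gd: "GG S a y = y j powr p * H powr w" using F(10) unfolding H_def p_def .
  have m_p: "m \<le> p" using F(11) unfolding m_def p_def .
  have m_w1: "m \<le> w" using F(13) unfolding m_def .
  have m_m': "m \<le> m'" using F(14) unfolding m_def m'_def .
  have w0: "0 < w" using F(1) .
  have p0: "0 < p" using F(2) unfolding p_def .
  have d1: "w * (Q' - A'^2) \<le> (1 - m) * (w * (Q' - H^2))"
  proof -
    have "Q' - A'^2 \<le> (1 - m) * (Q' - H^2)"
      using IH' m_m' QH mult_right_mono[of "1 - m'" "1 - m" "Q' - H^2"] by linarith
    then have "w * (Q' - A'^2) \<le> w * ((1 - m) * (Q' - H^2))" using w0 by (intro mult_left_mono) auto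
    then show ?thesis by (simp add: algebra_simps)
  qed
  have mmin: "p * w \<le> (1 - m) * min p w"
  proof (cases "p \<le> w")
    case True
    then have "w \<le> 1 - m" using m_p wp by simp
    then show ?thesis using True p0 by (simp add: min_def mult_left_mono mult.commute)
  next
    case False
    then have "p \<le> 1 - m" using m_w1 wp by simp
    then show ?thesis using False w0 by (simp add: min_def mult_right_mono)
  qed
  have sq: "(y j - A')^2 \<le> (y j - H)^2"
    using Ay HA H0 by (intro power_mono) auto
  have m1: "0 \<le> 1 - m" using m_p wp w0 by simp
  have d3: "p * w * (y j - A')^2 \<le> (1 - m) * (p * (y j)^2 + w * H^2 - (y j powr p * H powr w)^2)"
  proof -
    have "p * w * (y j - A')^2 \<le> p * w * (y j - H)^2" using sq p0 w0 by (intro mult_left_mono) auto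
    also have "\<dots> \<le> ((1 - m) * min p w) * (y j - H)^2" using mmin by (intro mult_right_mono) auto
    also have "\<dots> = (1 - m) * (min p w * (y j - H)^2)" by simp
    also have "\<dots> \<le> (1 - m) * (p * (y j)^2 + w * H^2 - (y j powr p * H powr w)^2)"
      using T m1 by (intro mult_left_mono) auto
    finally show ?thesis .
  qed
  have "QQ S a y - (GG S a y)^2 = w * (Q' - H^2) + (p * (y j)^2 + w * H^2 - (y j powr p * H powr w)^2)"
    using Qd Gd by (simp add: algebra_simps)
  moreover have "QQ S a y - (AA S a y)^2 = w * (Q' - A'^2) + p * w * (y j - A')^2"
    using Qd Ad step_common[OF wp] by simp
  ultimately show ?thesis using d1 d3 unfolding m_def[symmetric]
    by (simp add: distrib_left)
qed


lemma bounds_k: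
  assumes "card S = Suc k"
    and "\<And>i. i \<in> S \<Longrightarrow> 0 < a i" and "(\<Sum>i\<in>S. a i) = 1"
    and "\<And>i. i \<in> S \<Longrightarrow> 0 \<le> y i"
  shows "MM S a * (QQ S a y - (GG S a y)^2) \<le> QQ S a y - (AA S a y)^2 \<and>
         QQ S a y - (AA S a y)^2 \<le> (1 - MM S a) * (QQ S a y - (GG S a y)^2)"
  using assms
proof (induction k arbitrary: S a)
  case 0
  then have "card S = 1" by simp
  then obtain j where S: "S = {j}" by (rule card_1_singletonE)
  then have aj: "a j = 1" using 0 by simp
  have yj: "0 \<le> y j" using 0 S by simp
  have "QQ S a y = (y j)^2" "AA S a y = y j" "GG S a y = y j"
    unfolding QQ_def AA_def GG_def using S aj yj by auto
  then show ?case by simp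
next
  case (Suc k)
  have fin: "finite S" using Suc.prems(1) by (metis card.infinite nat.simps(3))
  have c2: "card S \<ge> 2" using Suc.prems(1) by simp
  have ne: "S \<noteq> {}" using c2 by auto
  have "Min (y ` S) \<in> y ` S" using fin ne by (intro Min_in) auto
  then obtain j1 where j1: "j1 \<in> S" "y j1 = Min (y ` S)" by auto
  have ymin: "\<And>i. i \<in> S \<Longrightarrow> y j1 \<le> y i" using j1 fin by simp
  have "Max (y ` S) \<in> y ` S" using fin ne by (intro Max_in) auto
  then obtain j2 where j2: "j2 \<in> S" "y j2 = Max (y ` S)" by auto
  have ymax: "\<And>i. i \<in> S \<Longrightarrow> y i \<le> y j2" using j2 fin by simp
  have IH: "\<And>j. j \<in> S \<Longrightarrow>
    MM (S - {j}) (\<lambda>i. a i / (1 - a j)) * (QQ (S - {j}) (\<lambda>i. a i / (1 - a j)) y - (GG (S - {j}) (\<lambda>i. a i / (1 - a j)) y)^2)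
       \<le> QQ (S - {j}) (\<lambda>i. a i / (1 - a j)) y - (AA (S - {j}) (\<lambda>i. a i / (1 - a j)) y)^2 \<and>
    QQ (S - {j}) (\<lambda>i. a i / (1 - a j)) y - (AA (S - {j}) (\<lambda>i. a i / (1 - a j)) y)^2
       \<le> (1 - MM (S - {j}) (\<lambda>i. a i / (1 - a j))) * (QQ (S - {j}) (\<lambda>i. a i / (1 - a j)) y - (GG (S - {j}) (\<lambda>i. a i / (1 - a j)) y)^2)"
  proof -
    fix j assume jS: "j \<in> S"
    note F = split_facts[OF fin jS c2 Suc.prems(2,3)]
    show "?thesis j"
    proof (rule Suc.IH)
      show "card (S - {j}) = Suc k" using F(5) Suc.prems(1) by simp
      show "\<And>i. i \<in> S - {j} \<Longrightarrow> 0 < a i / (1 - a j)" using F(6) by simp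
      show "(\<Sum>i\<in>S - {j}. a i / (1 - a j)) = 1" using F(7) by simp
      show "\<And>i. i \<in> S - {j} \<Longrightarrow> 0 \<le> y i" using Suc.prems(4) by simp
    qed
  qed
  show ?case
  proof
    show "MM S a * (QQ S a y - (GG S a y)^2) \<le> QQ S a y - (AA S a y)^2"
      by (rule step_upper[of S j1 a y, OF fin j1(1) c2 Suc.prems(2,3,4) ymin conjunct1[OF IH[OF j1(1)]]])
    show "QQ S a y - (AA S a y)^2 \<le> (1 - MM S a) * (QQ S a y - (GG S a y)^2)"
      by (rule step_lower[of S j2 a y, OF fin j2(1) c2 Suc.prems(2,3,4) ymax conjunct2[OF IH[OF j2(1)]]])
  qed
qed


lemma var_min:
  assumes "finite S" "(\<Sum>i\<in>S. a i) = 1"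
  shows "(\<Sum>i\<in>S. a i * (y i - AA S a y)^2) \<le> (\<Sum>i\<in>S. a i * (y i - c)^2)"
proof -
  have "0 \<le> (AA S a y - c)^2" by simp
  then show ?thesis using var_eq[OF assms, of y "AA S a y"] var_eq[OF assms, of y c]
    by (simp add: power2_eq_square algebra_simps)
qed

lemma sq_powr: "(\<bar>d\<bar> powr r)^2 = (d^2) powr r" for d r :: real
proof -
  have "(\<bar>d\<bar> powr r)^2 = (\<bar>d\<bar> * \<bar>d\<bar>) powr r"
    unfolding power2_eq_square by (rule powr_mult[symmetric])
  also have "\<bar>d\<bar> * \<bar>d\<bar> = d^2" by (simp add: power2_eq_square)
  finally show ?thesis .
qed

lemma cmp_r:
  assumes fin: "finite S" and a0: "\<And>i. i \<in> S \<Longrightarrow> 0 \<le> a i" and asum: "(\<Sum>i\<in>S. a i) = 1"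
    and y0: "\<And>i. i \<in> S \<Longrightarrow> 0 \<le> y i" and r: "0 < r" "r \<le> 1"
  shows "(\<Sum>i\<in>S. a i * (y i powr r - AA S a (\<lambda>i. y i powr r))^2)
         \<le> (\<Sum>i\<in>S. a i * (y i - AA S a y)^2) powr r"
proof -
  define M where "M = AA S a y"
  have M0: "0 \<le> M" unfolding M_def AA_def using a0 y0 by (auto intro!: sum_nonneg)
  have "(\<Sum>i\<in>S. a i * (y i powr r - AA S a (\<lambda>i. y i powr r))^2)
        \<le> (\<Sum>i\<in>S. a i * (y i powr r - M powr r)^2)"
    using var_min[OF fin asum, of "\<lambda>i. y i powr r" "M powr r"] by simp
  also have "\<dots> \<le> (\<Sum>i\<in>S. a i * ((y i - M)^2) powr r)"
  proof (rule sum_mono)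
    fix i assume i: "i \<in> S"
    have "\<bar>y i powr r - M powr r\<bar> \<le> \<bar>y i - M\<bar> powr r" using P1[of "y i" M r] y0 i M0 r by auto
    then have "\<bar>y i powr r - M powr r\<bar>^2 \<le> (\<bar>y i - M\<bar> powr r)^2" by (intro power_mono) auto
    then have "(y i powr r - M powr r)^2 \<le> ((y i - M)^2) powr r" by (simp add: sq_powr)
    then show "a i * (y i powr r - M powr r)^2 \<le> a i * ((y i - M)^2) powr r"
      using a0 i by (intro mult_left_mono) auto
  qed
  also have "\<dots> \<le> (\<Sum>i\<in>S. a i * (y i - M)^2) powr r"
    using J1[OF fin a0 asum, of "\<lambda>i. (y i - M)^2" r] r by auto
  finally show ?thesis unfolding M_def .
qed

lemma cmp_s:
  assumes fin: "finite S" and a0: "\<And>i. i \<in> S \<Longrightarrow> 0 \<le> a i" and asum: "(\<Sum>i\<in>S. a i) = 1"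
    and y0: "\<And>i. i \<in> S \<Longrightarrow> 0 \<le> y i" and s: "1 \<le> s"
  shows "(\<Sum>i\<in>S. a i * (y i - AA S a y)^2) powr s
         \<le> (\<Sum>i\<in>S. a i * (y i powr s - AA S a (\<lambda>i. y i powr s))^2)"
proof -
  define C where "C = AA S a (\<lambda>i. y i powr s)"
  have C0: "0 \<le> C" unfolding C_def AA_def using a0 y0 by (auto intro!: sum_nonneg)
  define d where "d = C powr (1/s)"
  have d0: "0 \<le> d" unfolding d_def by simp
  have dC: "d powr s = C" unfolding d_def using C0 s by (simp add: powr_powr)
  have V0: "0 \<le> (\<Sum>i\<in>S. a i * (y i - AA S a y)^2)" using a0 by (auto intro!: sum_nonneg)
  have "(\<Sum>i\<in>S. a i * (y i - AA S a y)^2) powr s \<le> (\<Sum>i\<in>S. a i * (y i - d)^2) powr s"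
    using var_min[OF fin asum, of y d] V0 s by (intro powr_mono2) auto
  also have "\<dots> \<le> (\<Sum>i\<in>S. a i * ((y i - d)^2) powr s)"
    using J2[OF fin a0 asum, of "\<lambda>i. (y i - d)^2" s] s by auto
  also have "\<dots> \<le> (\<Sum>i\<in>S. a i * (y i powr s - C)^2)"
  proof (rule sum_mono)
    fix i assume i: "i \<in> S"
    have "\<bar>y i - d\<bar> powr s \<le> \<bar>y i powr s - d powr s\<bar>" using P2[of "y i" d s] y0 i d0 s by auto
    then have "(\<bar>y i - d\<bar> powr s)^2 \<le> \<bar>y i powr s - C\<bar>^2" unfolding dC by (intro power_mono) auto
    then have "((y i - d)^2) powr s \<le> (y i powr s - C)^2" by (simp add: sq_powr)
    then show "a i * ((y i - d)^2) powr s \<le> a i * (y i powr s - C)^2"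
      using a0 i by (intro mult_left_mono) auto
  qed
  finally show ?thesis unfolding C_def .
qed

theorem theorem2p4:
  fixes n :: nat and x a :: "nat \<Rightarrow> real" and r s :: real
  assumes "n \<ge> 2"
    and "\<And>i. i \<in> {1..n} \<Longrightarrow> x i \<ge> 0"
    and "\<And>i. i \<in> {1..n} \<Longrightarrow> a i > 0"
    and "(\<Sum>i=1..n. a i) = 1"
    and "0 < r" and "r \<le> 1"
    and "1 \<le> s"
  shows "(1 / (1 - amin n a)) * wvar n a (vpow x (r/2)) powr (1/r)
           \<le> wmean n a x - wgeom n a x \<and>
         wmean n a x - wgeom n a x
           \<le> (1 / amin n a) * wvar n a (vpow x (s/2)) powr (1/s)"
proof -
  define S where "S = {1..n}"
  define y where "y = (\<lambda>i. x i powr (1/2))"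
  have fin: "finite S" unfolding S_def by simp
  have c2: "card S \<ge> 2" unfolding S_def using assms(1) by simp
  have apos: "\<And>i. i \<in> S \<Longrightarrow> 0 < a i" using assms(3) unfolding S_def .
  have a0: "\<And>i. i \<in> S \<Longrightarrow> 0 \<le> a i" using apos by (simp add: less_imp_le)
  have asum: "(\<Sum>i\<in>S. a i) = 1" using assms(4) unfolding S_def .
  have x0: "\<And>i. i \<in> S \<Longrightarrow> 0 \<le> x i" using assms(2) unfolding S_def .
  have y0: "\<And>i. i \<in> S \<Longrightarrow> 0 \<le> y i" unfolding y_def by simp
  have card: "card S = Suc (card S - 1)" using c2 by simp
  note B = bounds_k[OF card apos asum y0]
  define m where "m = MM S a"
  have am: "amin n a = m" unfolding m_def MM_def amin_def S_def ..
  have 1: "1 \<in> S" unfolding S_def using assms(1) by simp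
  note F = split_facts[OF fin 1 c2 apos asum]
  have m0: "0 < m" using F(15) unfolding m_def .
  have m1: "m < 1" using F(13) F(2) unfolding m_def by simp
  have xy: "\<And>i. i \<in> S \<Longrightarrow> x i = (y i)^2"
    unfolding y_def using x0 by (simp add: powr_half_sqrt)
  have Q: "wmean n a x = QQ S a y"
    unfolding wmean_def QQ_def S_def[symmetric] using xy by (intro sum.cong) auto
  have G: "wgeom n a x = (GG S a y)^2"
  proof -
    have "(GG S a y)^2 = (\<Prod>i\<in>S. (y i powr a i)^2)"
      unfolding GG_def by (simp add: prod_power_distrib)
    also have "\<dots> = (\<Prod>i\<in>S. x i powr a i)"
    proof (rule prod.cong)
      fix i assume "i \<in> S"
      then show "(y i powr a i)^2 = x i powr a i"
        using xy[of i] by (simp add: power2_eq_square powr_mult)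
    qed simp
    finally show ?thesis unfolding wgeom_def S_def by simp
  qed
  have vp: "\<And>t. vpow x (t/2) = (\<lambda>i. y i powr t)"
    unfolding vpow_def y_def by (simp add: powr_powr)
  have wv: "\<And>z. wvar n a z = (\<Sum>i\<in>S. a i * (z i - AA S a z)^2)"
    unfolding wvar_def wmean_def AA_def S_def ..
  define V1 where "V1 = (\<Sum>i\<in>S. a i * (y i - AA S a y)^2)"
  have V1e: "V1 = QQ S a y - (AA S a y)^2"
    unfolding V1_def using var_eq[OF fin asum, of y "AA S a y"] by (simp add: power2_eq_square)
  have V10: "0 \<le> V1" unfolding V1_def using a0 by (auto intro!: sum_nonneg)
  define E where "E = wmean n a x - wgeom n a x"
  have E: "E = QQ S a y - (GG S a y)^2" unfolding E_def Q G ..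
  have lowB: "V1 \<le> (1 - m) * E" using B V1e E m_def by simp
  have upB: "m * E \<le> V1" using B V1e E m_def by simp
  define Vr where "Vr = wvar n a (vpow x (r/2))"
  have Vr0: "0 \<le> Vr" unfolding Vr_def wv using a0 by (auto intro!: sum_nonneg)
  have "Vr \<le> V1 powr r"
    unfolding Vr_def wv vp V1_def using cmp_r[OF fin a0 asum y0 assms(5,6)] .
  then have "Vr powr (1/r) \<le> (V1 powr r) powr (1/r)"
    using Vr0 assms(5) by (intro powr_mono2) auto
  also have "\<dots> = V1" using V10 assms(5) by (simp add: powr_powr)
  finally have Vr1: "Vr powr (1/r) \<le> V1" .
  define Vs where "Vs = wvar n a (vpow x (s/2))"
  have "V1 powr s \<le> Vs"
    unfolding Vs_def wv vp V1_def using cmp_s[OF fin a0 asum y0 assms(7)] .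
  then have "(V1 powr s) powr (1/s) \<le> Vs powr (1/s)"
    using V10 assms(7) by (intro powr_mono2) auto
  then have Vs1: "V1 \<le> Vs powr (1/s)" using V10 assms(7) by (simp add: powr_powr)
  have L: "(1 / (1 - m)) * Vr powr (1/r) \<le> E"
  proof -
    have "(1 / (1 - m)) * Vr powr (1/r) \<le> (1 / (1 - m)) * V1"
      using Vr1 m1 by (intro mult_left_mono) auto
    also have "\<dots> \<le> E" using lowB m1 by (simp add: divide_simps mult.commute)
    finally show ?thesis .
  qed
  have U: "E \<le> (1 / m) * Vs powr (1/s)"
  proof -
    have "E \<le> (1 / m) * V1" using upB m0 by (simp add: divide_simps mult.commute)
    also have "\<dots> \<le> (1 / m) * Vs powr (1/s)" using Vs1 m0 by (intro mult_left_mono) auto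
    finally show ?thesis .
  qed
  show ?thesis using L U unfolding am E_def Vr_def Vs_def by simp
qed

end
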